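(* Let $\mathcal P=(P,T,F,\lambda)$ be a labelled Petri net with finite sets of places $P$ and transitions $T$, and let $X=X_{\mathcal P}$ be the associated $(\square(\Sigma)\times\mathbb N^P)$-presheaf. Then the sub-presheaf $X_{nac}$ and, for every $d\ge1$, the sub-presheaf $X_{\le d}$ of $X$ are finitely generated. Consequently, equipped with any finite sets of start and accept elements, they are higher-dimensional automata with counters of finite type.
   Context: Fix an alphabet $\Sigma$. $\square(\Sigma)$ is the category whose objects are finite words $a_1\cdots a_n$ over $\Sigma$ ($n\ge0$) and whose morphisms $V\to U$ (with $|V|=m$, $|U|=n$) are pairs $(f,\varepsilon)$ with $f:\{1,\dots,m\}\to\{1,\dots,n\}$ strictly increasing and letter-preserving and $\varepsilon:\{1,\dots,n\}\setminus f(\{1,\dots,m\})\to\{0,1\}$; composition of $(g,\eta):W\to V$ and $(f,\varepsilon):V\to U$ is $(fg,\theta)$ with $\theta(u)=\varepsilon(u)$ for $u\notin f(V)$ and $\theta(u)=\eta(f^{-1}(u))$ otherwise. For $U=a_1\cdots a_n$, $1\le i\le n$, $\varepsilon\in\{0,1\}$, $d^\varepsilon_i:a_1\cdots a_{i-1}a_{i+1}\cdots a_n\to U$ omits position $i$ with value $\varepsilon$ there; these generate all morphisms. The monoid $\mathbb N^P$ is viewed as a one-object category, and $\square(\Sigma)\times\mathbb N^P$ is the product category (objects: words; morphisms: pairs $(\varphi,\mathsf w)$). A labelled Petri net: places $P$, transitions $T$, flow $F\subseteq(P\times T)\sqcup(T\times P)$, labelling $\lambda:T\to\Sigma$; $\mathsf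 a(t),\mathsf b(t)\in\{0,1\}^P\subseteq\mathbb N^P$ with $\mathsf a(t)_p=1$ iff $(p,t)\in F$, $\mathsf b(t)_p=1$ iff $(t,p)\in F$. $X_{\mathcal P}$ assigns to a word $U$ the set of $(t_1,\dots,t_n;\mathsf v)$ with $t_i\in T$, $\lambda(t_1)\cdots\lambda(t_n)=U$, $\mathsf v\in\mathbb N^P$, with $X[(\mathrm{id},\mathsf w)](\mathbf t;\mathsf v)=(\mathbf t;\mathsf v+\mathsf w)$, $X[(d^0_i,\mathsf w)](t_1,\dots,t_n;\mathsf v)=(t_1,\dots,t_{i-1},t_{i+1},\dots,t_n;\mathsf v+\mathsf a(t_i)+\mathsf w)$ and $X[(d^1_i,\mathsf w)](t_1,\dots,t_n;\mathsf v)=(t_1,\dots,t_{i-1},t_{i+1},\dots,t_n;\mathsf v+\mathsf b(t_i)+\mathsf w)$. $X_{nac}$ consists of the elements $(t_1,\dots,t_n;\mathsf v)$ with the $t_i$ pairwise distinct; $X_{\le d}$ of those with $n\le d$. A presheaf $Z$ on a small category $\mathcal D$ is finitely generated if $Z\cong\operatorname{colim}_{e\in\mathcal E}\mathcal D(-,G(e))$ for some finite category $\mathcal E$ and functor $G:\mathcal E\to\mathcal D$. A higher-dimensional automaton with counters is such a presheaf with sets of start and accept elements; finite type means finitely generated with finitely many start and accept elements. *)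

theory Defs
  imports Main
begin

text \<open>A morphism (f,eps) : V -> U of Box(Sigma) is encoded canonically by a list xs of length |U|:
  xs!u = None   iff u is in the image of f (f is then determined, being strictly increasing),
  xs!u = Some e iff u is not in the image and eps(u) = e (False = 0, True = 1).
  A morphism of the product category is a pair (xs, w) with w in N^P, i.e. w :: 'p => nat.\<close>

type_synonym 'p morph = "bool option list \<times> ('p \<Rightarrow> nat)"

definition dhom :: "'a list \<Rightarrow> 'a list \<Rightarrow> 'p morph set" where
  "dhom V U = {(xs, w). length xs = length U \<and>
       V = map fst (filter (\<lambda>(a, o'). o' = None) (zip U xs))}"

fun fill :: "bool option list \<Rightarrow> bool option list \<Rightarrow> bool option list" where
  "fill [] ys = []"
| "fill (Some e # xs) ys = Some e # fill xs ys"
| "fill (None # xs) (y # ys) = y # fill xs ys"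
| "fill (None # xs) [] = None # fill xs []"

text \<open>dcomp phi psi = phi o psi (first psi : W -> V, then phi : V -> U).\<close>
definition dcomp :: "'p morph \<Rightarrow> 'p morph \<Rightarrow> 'p morph" where
  "dcomp phi psi = (fill (fst phi) (fst psi), \<lambda>p. snd phi p + snd psi p)"

definition did :: "'a list \<Rightarrow> 'p morph" where
  "did U = (replicate (length U) None, \<lambda>_. 0)"

definition presheaf :: "('a list \<Rightarrow> 'x set) \<Rightarrow> ('a list \<Rightarrow> 'p morph \<Rightarrow> 'x \<Rightarrow> 'x) \<Rightarrow> bool" where
  "presheaf Z act \<longleftrightarrow>
     (\<forall>U V phi x. phi \<in> dhom V U \<and> x \<in> Z U \<longrightarrow> act U phi x \<in> Z V) \<and>
     (\<forall>U x. x \<in> Z U \<longrightarrow> act U (did U) x = x) \<and>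
     (\<forall>U V W phi psi x. phi \<in> dhom V U \<and> psi \<in> dhom W V \<and> x \<in> Z U \<longrightarrow>
         act U (dcomp phi psi) x = act V psi (act U phi x))"

definition fin_cat :: "nat set \<Rightarrow> nat set \<Rightarrow> (nat \<Rightarrow> nat) \<Rightarrow> (nat \<Rightarrow> nat) \<Rightarrow> (nat \<Rightarrow> nat)
                        \<Rightarrow> (nat \<Rightarrow> nat \<Rightarrow> nat) \<Rightarrow> bool" where
  "fin_cat Ob Ar dm cd idn cmp \<longleftrightarrow>
     finite Ob \<and> finite Ar \<and>
     (\<forall>f\<in>Ar. dm f \<in> Ob \<and> cd f \<in> Ob) \<and>
     (\<forall>e\<in>Ob. idn e \<in> Ar \<and> dm (idn e) = e \<and> cd (idn e) = e) \<and>
     (\<forall>f\<in>Ar. \<forall>g\<in>Ar. cd f = dm g \<longrightarrow>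
        cmp g f \<in> Ar \<and> dm (cmp g f) = dm f \<and> cd (cmp g f) = cd g) \<and>
     (\<forall>f\<in>Ar. cmp f (idn (dm f)) = f \<and> cmp (idn (cd f)) f = f) \<and>
     (\<forall>f\<in>Ar. \<forall>g\<in>Ar. \<forall>h\<in>Ar. cd f = dm g \<and> cd g = dm h \<longrightarrow>
        cmp h (cmp g f) = cmp (cmp h g) f)"

definition is_functor :: "nat set \<Rightarrow> nat set \<Rightarrow> (nat \<Rightarrow> nat) \<Rightarrow> (nat \<Rightarrow> nat) \<Rightarrow> (nat \<Rightarrow> nat)
                        \<Rightarrow> (nat \<Rightarrow> nat \<Rightarrow> nat) \<Rightarrow> (nat \<Rightarrow> 'a list) \<Rightarrow> (nat \<Rightarrow> 'p morph) \<Rightarrow> bool" where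
  "is_functor Ob Ar dm cd idn cmp Gob Gar \<longleftrightarrow>
     (\<forall>f\<in>Ar. Gar f \<in> dhom (Gob (dm f)) (Gob (cd f))) \<and>
     (\<forall>e\<in>Ob. Gar (idn e) = did (Gob e)) \<and>
     (\<forall>f\<in>Ar. \<forall>g\<in>Ar. cd f = dm g \<longrightarrow> Gar (cmp g f) = dcomp (Gar g) (Gar f))"

section \<open>The colimit of the representables D(-, G e), computed pointwise\<close>

definition colim_base :: "nat set \<Rightarrow> (nat \<Rightarrow> 'a list) \<Rightarrow> 'a list \<Rightarrow> (nat \<times> 'p morph) set" where
  "colim_base Ob Gob U = {(e, phi). e \<in> Ob \<and> phi \<in> dhom U (Gob e)}"

definition colim_step :: "nat set \<Rightarrow> (nat \<Rightarrow> nat) \<Rightarrow> (nat \<Rightarrow> nat) \<Rightarrow> (nat \<Rightarrow> 'a list)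
       \<Rightarrow> (nat \<Rightarrow> 'p morph) \<Rightarrow> 'a list \<Rightarrow> ((nat \<times> 'p morph) \<times> (nat \<times> 'p morph)) set" where
  "colim_step Ar dm cd Gob Gar U =
     {((dm f, phi), (cd f, dcomp (Gar f) phi)) | f phi. f \<in> Ar \<and> phi \<in> dhom U (Gob (dm f))}"

definition colim_equiv :: "nat set \<Rightarrow> nat set \<Rightarrow> (nat \<Rightarrow> nat) \<Rightarrow> (nat \<Rightarrow> nat) \<Rightarrow> (nat \<Rightarrow> 'a list)
       \<Rightarrow> (nat \<Rightarrow> 'p morph) \<Rightarrow> 'a list \<Rightarrow> ((nat \<times> 'p morph) \<times> (nat \<times> 'p morph)) set" where
  "colim_equiv Ob Ar dm cd Gob Gar U =
     Id_on (colim_base Ob Gob U) \<union>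
     (colim_step Ar dm cd Gob Gar U \<union> (colim_step Ar dm cd Gob Gar U)\<inverse>)\<^sup>+"

definition colim :: "nat set \<Rightarrow> nat set \<Rightarrow> (nat \<Rightarrow> nat) \<Rightarrow> (nat \<Rightarrow> nat) \<Rightarrow> (nat \<Rightarrow> 'a list)
       \<Rightarrow> (nat \<Rightarrow> 'p morph) \<Rightarrow> 'a list \<Rightarrow> (nat \<times> 'p morph) set set" where
  "colim Ob Ar dm cd Gob Gar U =
     colim_base Ob Gob U // colim_equiv Ob Ar dm cd Gob Gar U"

definition colim_act :: "nat set \<Rightarrow> nat set \<Rightarrow> (nat \<Rightarrow> nat) \<Rightarrow> (nat \<Rightarrow> nat) \<Rightarrow> (nat \<Rightarrow> 'a list)
       \<Rightarrow> (nat \<Rightarrow> 'p morph) \<Rightarrow> 'a list \<Rightarrow> 'p morph \<Rightarrow> (nat \<times> 'p morph) set \<Rightarrow> (nat \<times> 'p morph) set" where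
  "colim_act Ob Ar dm cd Gob Gar V psi C =
     colim_equiv Ob Ar dm cd Gob Gar V `` {(e, dcomp phi psi) | e phi. (e, phi) \<in> C}"

text \<open>Finitely generated: naturally isomorphic to colim_{e in E} D(-, G e) for a finite category E
  (objects and arrows encoded by natural numbers, w.l.o.g.) and a functor G : E -> D.\<close>
definition fin_gen :: "('a list \<Rightarrow> 'x set) \<Rightarrow> ('a list \<Rightarrow> 'p morph \<Rightarrow> 'x \<Rightarrow> 'x) \<Rightarrow> bool" where
  "fin_gen Z act \<longleftrightarrow> presheaf Z act \<and>
     (\<exists>Ob Ar dm cd idn cmp Gob Gar
        (\<theta> :: 'a list \<Rightarrow> 'x \<Rightarrow> (nat \<times> 'p morph) set).
        fin_cat Ob Ar dm cd idn cmp \<and> is_functor Ob Ar dm cd idn cmp Gob Gar \<and>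
        (\<forall>U. bij_betw (\<theta> U) (Z U) (colim Ob Ar dm cd Gob Gar U)) \<and>
        (\<forall>U V phi x. phi \<in> dhom V U \<and> x \<in> Z U \<longrightarrow>
            \<theta> V (act U phi x) = colim_act Ob Ar dm cd Gob Gar V phi (\<theta> U x)))"

definition elems :: "('a list \<Rightarrow> 'x set) \<Rightarrow> ('a list \<times> 'x) set" where
  "elems Z = Sigma UNIV Z"

definition hdac_finite_type :: "('a list \<Rightarrow> 'x set) \<Rightarrow> ('a list \<Rightarrow> 'p morph \<Rightarrow> 'x \<Rightarrow> 'x)
       \<Rightarrow> ('a list \<times> 'x) set \<Rightarrow> ('a list \<times> 'x) set \<Rightarrow> bool" where
  "hdac_finite_type Z act S A \<longleftrightarrow>
     fin_gen Z act \<and> S \<subseteq> elems Z \<and> A \<subseteq> elems Z \<and> finite S \<and> finite A"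

text \<open>Places = the finite type 'p, transitions = the finite type 't,
  flow F \<subseteq> (P x T) + (T x P), labelling lab : T -> Sigma.\<close>

definition pre_vec :: "('p \<times> 't + 't \<times> 'p) set \<Rightarrow> 't \<Rightarrow> 'p \<Rightarrow> nat" where
  "pre_vec F t p = (if Inl (p, t) \<in> F then 1 else 0)"

definition post_vec :: "('p \<times> 't + 't \<times> 'p) set \<Rightarrow> 't \<Rightarrow> 'p \<Rightarrow> nat" where
  "post_vec F t p = (if Inr (t, p) \<in> F then 1 else 0)"

definition X_P :: "('p \<times> 't + 't \<times> 'p) set \<Rightarrow> ('t \<Rightarrow> 'a) \<Rightarrow> 'a list \<Rightarrow> ('t list \<times> ('p \<Rightarrow> nat)) set" where
  "X_P F lab U = {(ts, v). map lab ts = U}"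

text \<open>Action of (xs, w) : V -> U: delete the positions not in the image, adding a(t_u) for value 0
  and b(t_u) for value 1 there, and add w. On generators (d^e_i, w) this is exactly the given formula.\<close>
definition X_act :: "('p \<times> 't + 't \<times> 'p) set \<Rightarrow> 'a list \<Rightarrow> 'p morph
       \<Rightarrow> ('t list \<times> ('p \<Rightarrow> nat)) \<Rightarrow> ('t list \<times> ('p \<Rightarrow> nat))" where
  "X_act F U phi x =
     (map fst (filter (\<lambda>(t, o'). o' = None) (zip (fst x) (fst phi))),
      \<lambda>p. snd x p + snd phi p +
          (\<Sum>u<length (fst phi). case fst phi ! u of
               None \<Rightarrow> 0
             | Some e \<Rightarrow> (if e then post_vec F (fst x ! u) p else pre_vec F (fst x ! u) p)))"

definition X_nac :: "('p \<times> 't + 't \<times> 'p) set \<Rightarrow> ('t \<Rightarrow> 'a) \<Rightarrow> 'a list \<Rightarrow> ('t list \<times> ('p \<Rightarrow> nat)) set" where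
  "X_nac F lab U = {x \<in> X_P F lab U. distinct (fst x)}"

definition X_le :: "('p \<times> 't + 't \<times> 'p) set \<Rightarrow> ('t \<Rightarrow> 'a) \<Rightarrow> nat \<Rightarrow> 'a list \<Rightarrow> ('t list \<times> ('p \<Rightarrow> nat)) set" where
  "X_le F lab d U = {x \<in> X_P F lab U. length (fst x) \<le> d}"

end

theory Submission imports Defs "HOL-Library.FuncSet" begin

fun sel :: "'b list \<Rightarrow> bool option list \<Rightarrow> 'b list" where
  "sel (t#ts) (None#xs) = t # sel ts xs"
| "sel (t#ts) (Some e#xs) = sel ts xs"
| "sel _ _ = []"

fun fs :: "('p \<times> 't + 't \<times> 'p) set \<Rightarrow> 't list \<Rightarrow> bool option list \<Rightarrow> 'p \<Rightarrow> nat" where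
  "fs F (t#ts) (Some e#xs) p = (if e then post_vec F t p else pre_vec F t p) + fs F ts xs p"
| "fs F (t#ts) (None#xs) p = fs F ts xs p"
| "fs F _ _ p = 0"

abbreviation cnt :: "bool option list \<Rightarrow> nat" where
  "cnt xs \<equiv> length (filter (\<lambda>o'. o' = None) xs)"

lemma sel_eq: "map fst (filter (\<lambda>(a, o'). o' = None) (zip ts xs)) = sel ts xs"
  by (induction ts xs rule: sel.induct) auto

lemma fs_sum: "length ts = length xs \<Longrightarrow>
  (\<Sum>u<length xs. case xs ! u of None \<Rightarrow> 0
     | Some e \<Rightarrow> (if e then post_vec F (ts ! u) p else pre_vec F (ts ! u) p)) = fs F ts xs p"
proof (induction xs arbitrary: ts)
  case Nil then show ?case by simp
next
  case (Cons x xs)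
  then obtain t ts' where ts: "ts = t # ts'" by (cases ts) auto
  have "(\<Sum>u<length (x#xs). case (x#xs) ! u of None \<Rightarrow> 0
     | Some e \<Rightarrow> (if e then post_vec F (ts ! u) p else pre_vec F (ts ! u) p)) =
     (case x of None \<Rightarrow> 0 | Some e \<Rightarrow> (if e then post_vec F t p else pre_vec F t p)) +
     (\<Sum>u<length xs. case xs ! u of None \<Rightarrow> 0
     | Some e \<Rightarrow> (if e then post_vec F (ts' ! u) p else pre_vec F (ts' ! u) p))"
    unfolding ts length_Cons sum.lessThan_Suc_shift
    apply (rule arg_cong2[where f="(+)"])
     apply (cases x; simp)
    apply (rule sum.cong; simp split: option.split)
    done
  with Cons ts show ?case by (cases x) auto
qed

lemma length_sel: "length ts = length xs \<Longrightarrow> length (sel ts xs) = cnt xs"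
  by (induction ts xs rule: sel.induct) auto

lemma length_sel_le: "length (sel ts xs) \<le> length ts"
  by (induction ts xs rule: sel.induct) auto

lemma set_sel: "set (sel ts xs) \<subseteq> set ts"
  by (induction ts xs rule: sel.induct) auto

lemma distinct_sel: "distinct ts \<Longrightarrow> distinct (sel ts xs)"
  by (induction ts xs rule: sel.induct) (auto dest: set_sel[THEN subsetD])

lemma map_sel: "map f (sel ts xs) = sel (map f ts) xs"
  by (induction ts xs rule: sel.induct) auto

lemma fs_bound: "fs F ts xs p + length (sel ts xs) \<le> length ts"
  by (induction F ts xs p rule: fs.induct) (auto simp: pre_vec_def post_vec_def)

lemma sel_repl: "length ts = n \<Longrightarrow> sel ts (replicate n None) = ts"
  by (induction ts arbitrary: n) auto

lemma fs_repl: "fs F ts (replicate n None) p = 0"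
  by (induction ts arbitrary: n) (auto, case_tac n, auto)

lemma length_fill: "length (fill xs ys) = length xs"
  by (induction xs ys rule: fill.induct) auto

lemma cnt_fill: "length ys = cnt xs \<Longrightarrow> cnt (fill xs ys) = cnt ys"
  by (induction xs ys rule: fill.induct) auto

lemma fill_repl_right: "fill xs (replicate (cnt xs) None) = xs"
  by (induction xs) (auto split: option.splits)

lemma fill_repl_left: "length ys = n \<Longrightarrow> fill (replicate n None) ys = ys"
  by (induction ys arbitrary: n) auto

lemma fill_assoc: "length ys = cnt xs \<Longrightarrow> length zs = cnt ys \<Longrightarrow>
   fill (fill xs ys) zs = fill xs (fill ys zs)"
proof (induction xs ys arbitrary: zs rule: fill.induct)
  case (3 xs y ys)
  then show ?case by (cases y; cases zs) auto
qed auto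

lemma sel_fill: "length ts = length xs \<Longrightarrow> length ys = cnt xs \<Longrightarrow>
   sel ts (fill xs ys) = sel (sel ts xs) ys"
proof (induction xs ys arbitrary: ts rule: fill.induct)
  case (1 ys) then show ?case by simp
next
  case (2 e xs ys) then show ?case by (cases ts) auto
next
  case (3 xs y ys) then show ?case by (cases ts; cases y) auto
next
  case (4 xs) then show ?case by simp
qed

lemma fs_fill: "length ts = length xs \<Longrightarrow> length ys = cnt xs \<Longrightarrow>
   fs F ts (fill xs ys) p = fs F ts xs p + fs F (sel ts xs) ys p"
proof (induction xs ys arbitrary: ts rule: fill.induct)
  case (1 ys) then show ?case by simp
next
  case (2 e xs ys) then show ?case by (cases ts) auto
next
  case (3 xs y ys) then show ?case by (cases ts; cases y) auto
next
  case (4 xs) then show ?case by simp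
qed

lemma dhom_iff: "phi \<in> dhom V U \<longleftrightarrow> length (fst phi) = length U \<and> V = sel U (fst phi)"
  by (cases phi) (simp add: dhom_def sel_eq)

lemma dcomp_dhom: "phi \<in> dhom V U \<Longrightarrow> psi \<in> dhom W V \<Longrightarrow> dcomp phi psi \<in> dhom W U"
  by (auto simp: dhom_iff dcomp_def length_fill length_sel sel_fill)

lemma did_dhom: "did U \<in> dhom U U"
  by (simp add: dhom_iff did_def sel_repl)

lemma dcomp_did_right: "phi \<in> dhom V U \<Longrightarrow> dcomp phi (did V) = phi"
  by (cases phi) (auto simp: dhom_iff dcomp_def did_def length_sel fill_repl_right)

lemma dcomp_did_left: "phi \<in> dhom V U \<Longrightarrow> dcomp (did U) phi = phi"
  by (cases phi) (auto simp: dhom_iff dcomp_def did_def length_sel fill_repl_left)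

lemma dcomp_assoc: "a \<in> dhom V U \<Longrightarrow> b \<in> dhom W V \<Longrightarrow> c \<in> dhom Y W \<Longrightarrow>
   dcomp (dcomp a b) c = dcomp a (dcomp b c)"
  by (auto simp: dhom_iff dcomp_def length_sel fill_assoc add.assoc)


lemma X_act_eq: "length ts = length xs \<Longrightarrow>
   X_act F U (xs, w) (ts, v) = (sel ts xs, \<lambda>p. v p + w p + fs F ts xs p)"
  unfolding X_act_def by (simp add: sel_eq fs_sum)

definition ZG :: "('p \<times> 't + 't \<times> 'p) set \<Rightarrow> ('t \<Rightarrow> 'a) \<Rightarrow> 't list set \<Rightarrow> 'a list \<Rightarrow> ('t list \<times> ('p \<Rightarrow> nat)) set" where
  "ZG F lab G U = {x \<in> X_P F lab U. fst x \<in> G}"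

lemma ZG_iff: "(ts, v) \<in> ZG F lab G U \<longleftrightarrow> map lab ts = U \<and> ts \<in> G"
  by (simp add: ZG_def X_P_def)

lemma presheaf_ZG:
  fixes F :: "('p \<times> 't + 't \<times> 'p) set" and lab :: "'t \<Rightarrow> 'a"
  assumes G: "\<And>ts xs. ts \<in> G \<Longrightarrow> sel ts xs \<in> G"
  shows "presheaf (ZG F lab G) (X_act F)"
  unfolding presheaf_def
proof (intro conjI allI impI)
  fix U V and phi :: "'p morph" and x assume h: "phi \<in> dhom V U \<and> x \<in> ZG F lab G U"
  obtain xs w where phi: "phi = (xs, w)" by (cases phi)
  obtain ts v where x: "x = (ts, v)" by (cases x)
  from h have l: "length ts = length xs" and V: "V = sel U xs" and U: "map lab ts = U" and g: "ts \<in> G"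
    by (auto simp: phi x dhom_iff ZG_iff)
  show "X_act F U phi x \<in> ZG F lab G V"
    using l V U g G by (simp add: phi x X_act_eq ZG_iff map_sel)
next
  fix U x assume h: "x \<in> ZG F lab G U"
  obtain ts v where x: "x = (ts, v)" by (cases x)
  from h have U: "map lab ts = U" by (auto simp: x ZG_iff)
  show "X_act F U (did U) x = x"
    using U by (auto simp: x did_def X_act_eq sel_repl fs_repl)
next
  fix U V W and phi psi :: "'p morph" and x assume h: "phi \<in> dhom V U \<and> psi \<in> dhom W V \<and> x \<in> ZG F lab G U"
  obtain xs w where phi: "phi = (xs, w)" by (cases phi)
  obtain ys w' where psi: "psi = (ys, w')" by (cases psi)
  obtain ts v where x: "x = (ts, v)" by (cases x)
  from h have l: "length ts = length xs" and V: "V = sel U xs" and U: "map lab ts = U"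
    and l2: "length ys = length V" and W: "W = sel V ys" and lU: "length xs = length U"
    by (auto simp: phi psi x dhom_iff ZG_iff)
  have c: "length ys = cnt xs" using l2 V lU by (simp add: length_sel)
  have l3: "length (sel ts xs) = length ys" using c l by (simp add: length_sel)
  show "X_act F U (dcomp phi psi) x = X_act F V psi (X_act F U phi x)"
    using l c l3 by (simp add: phi psi x dcomp_def X_act_eq length_fill sel_fill fs_fill fun_eq_iff)
qed


lemma fin_gen_intro:
  fixes Z :: "'a list \<Rightarrow> 'x set" and act :: "'a list \<Rightarrow> 'p morph \<Rightarrow> 'x \<Rightarrow> 'x"
    and E :: "('a list \<times> 'x) set" and cz :: "'a list \<Rightarrow> 'x \<Rightarrow> 'x"
    and kz :: "'a list \<Rightarrow> 'x \<Rightarrow> 'p morph"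
  assumes ps: "presheaf Z act"
    and finE: "finite E"
    and EZ: "\<And>U x. (U, x) \<in> E \<Longrightarrow> x \<in> Z U"
    and finA: "\<And>U x V y. (U, x) \<in> E \<Longrightarrow> (V, y) \<in> E \<Longrightarrow> finite {phi \<in> dhom V U. act U phi x = y}"
    and srj: "\<And>U x. x \<in> Z U \<Longrightarrow> (U, cz U x) \<in> E \<and> kz U x \<in> dhom U U \<and> act U (kz U x) (cz U x) = x"
    and norm: "\<And>U x W phi. (U, x) \<in> E \<Longrightarrow> phi \<in> dhom W U \<Longrightarrow>
       \<exists>y psi a chi. (W, y) \<in> E \<and> psi \<in> dhom W W \<and> a \<in> dhom W U \<and> act U a x = y \<and>
          dcomp a psi = phi \<and> chi \<in> dhom W W \<and> act W chi (cz W (act U phi x)) = y \<and>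
          dcomp chi psi = kz W (act U phi x)"
  shows "fin_gen Z act"
proof -
  have act_in: "\<And>U V phi x. phi \<in> dhom V U \<Longrightarrow> x \<in> Z U \<Longrightarrow> act U phi x \<in> Z V"
    using ps unfolding presheaf_def by blast
  have act_id: "\<And>U x. x \<in> Z U \<Longrightarrow> act U (did U) x = x"
    using ps unfolding presheaf_def by blast
  have act_comp: "\<And>U V W phi psi x. phi \<in> dhom V U \<Longrightarrow> psi \<in> dhom W V \<Longrightarrow> x \<in> Z U \<Longrightarrow>
         act U (dcomp phi psi) x = act V psi (act U phi x)"
    using ps unfolding presheaf_def by blast
  define n where "n = card E"
  obtain eo where eo: "bij_betw eo {0..<n} E"
    using ex_bij_betw_nat_finite[OF finE] n_def by blast
  define Gob where "Gob i = fst (eo i)" for i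
  define xe where "xe i = snd (eo i)" for i
  have eoE: "\<And>i. i < n \<Longrightarrow> (Gob i, xe i) \<in> E"
    using eo by (auto simp: bij_betw_def Gob_def xe_def)
  have xeZ: "\<And>i. i < n \<Longrightarrow> xe i \<in> Z (Gob i)" using eoE EZ by blast
  define idx where "idx = the_inv_into {0..<n} eo"
  have idx: "\<And>e. e \<in> E \<Longrightarrow> idx e < n \<and> eo (idx e) = e"
  proof -
    fix e assume "e \<in> E"
    with eo have i: "inj_on eo {0..<n}" and e: "e \<in> eo ` {0..<n}" by (auto simp: bij_betw_def)
    show "idx e < n \<and> eo (idx e) = e"
      using the_inv_into_into[OF i e order_refl] f_the_inv_into_f[OF i e] by (simp add: idx_def)
  qed
  have idxG: "\<And>U x. (U, x) \<in> E \<Longrightarrow> idx (U, x) < n \<and> Gob (idx (U, x)) = U \<and> xe (idx (U, x)) = x"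
    using idx by (auto simp: Gob_def xe_def)
  define AR where "AR = {(i, j, phi). i < n \<and> j < n \<and> phi \<in> dhom (Gob i) (Gob j) \<and>
                         act (Gob j) phi (xe j) = xe i}"
  have "AR \<subseteq> (\<Union>i<n. \<Union>j<n. (\<lambda>phi. (i, j, phi)) ` {phi \<in> dhom (Gob i) (Gob j). act (Gob j) phi (xe j) = xe i})"
    unfolding AR_def by auto
  moreover have "finite (\<Union>i<n. \<Union>j<n. (\<lambda>phi. (i, j, phi)) ` {phi \<in> dhom (Gob i) (Gob j). act (Gob j) phi (xe j) = xe i})"
    using finA eoE by auto
  ultimately have finAR: "finite AR" by (rule finite_subset)
  define m where "m = card AR"
  obtain ea where ea: "bij_betw ea {0..<m} AR"
    using ex_bij_betw_nat_finite[OF finAR] m_def by blast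
  define inva where "inva = the_inv_into {0..<m} ea"
  have inva: "\<And>a. a \<in> AR \<Longrightarrow> inva a < m \<and> ea (inva a) = a"
  proof -
    fix e assume "e \<in> AR"
    with ea have i: "inj_on ea {0..<m}" and e: "e \<in> ea ` {0..<m}" by (auto simp: bij_betw_def)
    show "inva e < m \<and> ea (inva e) = e"
      using the_inv_into_into[OF i e order_refl] f_the_inv_into_f[OF i e] by (simp add: inva_def)
  qed
  have inva2: "\<And>f. f < m \<Longrightarrow> inva (ea f) = f"
    using ea unfolding inva_def bij_betw_def by (simp add: the_inv_into_f_f)
  define dm where "dm f = fst (ea f)" for f
  define cd where "cd f = fst (snd (ea f))" for f
  define Gar where "Gar f = snd (snd (ea f))" for f
  define idn where "idn i = inva (i, i, did (Gob i))" for i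
  define cmp where "cmp g f = inva (dm f, cd g, dcomp (Gar g) (Gar f))" for g f
  define Ob where "Ob = {0..<n}"
  define Ar where "Ar = {0..<m}"
  have eaf: "\<And>f. f < m \<Longrightarrow> ea f = (dm f, cd f, Gar f)"
    by (simp add: dm_def cd_def Gar_def)
  have arF: "\<And>f. f < m \<Longrightarrow> dm f < n \<and> cd f < n \<and> Gar f \<in> dhom (Gob (dm f)) (Gob (cd f)) \<and>
       act (Gob (cd f)) (Gar f) (xe (cd f)) = xe (dm f)"
  proof -
    fix f assume "f < m"
    then have "ea f \<in> AR" using ea by (auto simp: bij_betw_def)
    then show "dm f < n \<and> cd f < n \<and> Gar f \<in> dhom (Gob (dm f)) (Gob (cd f)) \<and>
       act (Gob (cd f)) (Gar f) (xe (cd f)) = xe (dm f)"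
      by (auto simp: AR_def dm_def cd_def Gar_def split: prod.splits)
  qed
  have mk: "\<And>i j phi. i < n \<Longrightarrow> j < n \<Longrightarrow> phi \<in> dhom (Gob i) (Gob j) \<Longrightarrow>
      act (Gob j) phi (xe j) = xe i \<Longrightarrow>
      inva (i, j, phi) < m \<and> dm (inva (i, j, phi)) = i \<and> cd (inva (i, j, phi)) = j \<and>
      Gar (inva (i, j, phi)) = phi"
  proof -
    fix i j phi assume "i < n" "j < n" "phi \<in> dhom (Gob i) (Gob j)" "act (Gob j) phi (xe j) = xe i"
    then have "(i, j, phi) \<in> AR" by (simp add: AR_def)
    from inva[OF this] show "inva (i, j, phi) < m \<and> dm (inva (i, j, phi)) = i \<and> cd (inva (i, j, phi)) = j \<and>
      Gar (inva (i, j, phi)) = phi" by (simp add: dm_def cd_def Gar_def)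
  qed
  have idnF: "\<And>i. i < n \<Longrightarrow> idn i < m \<and> dm (idn i) = i \<and> cd (idn i) = i \<and> Gar (idn i) = did (Gob i)"
  proof -
    fix i assume i: "i < n"
    show "idn i < m \<and> dm (idn i) = i \<and> cd (idn i) = i \<and> Gar (idn i) = did (Gob i)"
      unfolding idn_def by (rule mk[OF i i did_dhom act_id[OF xeZ[OF i]]])
  qed
  have cmpF: "\<And>f g. f < m \<Longrightarrow> g < m \<Longrightarrow> cd f = dm g \<Longrightarrow>
     cmp g f < m \<and> dm (cmp g f) = dm f \<and> cd (cmp g f) = cd g \<and> Gar (cmp g f) = dcomp (Gar g) (Gar f)"
  proof -
    fix f g assume f: "f < m" and g: "g < m" and fg: "cd f = dm g"
    note F = arF[OF f] and G = arF[OF g]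
    have d: "dcomp (Gar g) (Gar f) \<in> dhom (Gob (dm f)) (Gob (cd g))"
      using F G fg dcomp_dhom by metis
    have "act (Gob (cd g)) (dcomp (Gar g) (Gar f)) (xe (cd g)) = xe (dm f)"
      using act_comp[of "Gar g" "Gob (dm g)" "Gob (cd g)" "Gar f" "Gob (dm f)" "xe (cd g)"] F G fg xeZ
      by metis
    then show "cmp g f < m \<and> dm (cmp g f) = dm f \<and> cd (cmp g f) = cd g \<and> Gar (cmp g f) = dcomp (Gar g) (Gar f)"
      unfolding cmp_def using mk[OF _ _ d] F G by blast
  qed
  have fc: "fin_cat Ob Ar dm cd idn cmp"
    unfolding fin_cat_def
  proof (intro conjI ballI impI)
    show "finite Ob" "finite Ar" by (simp_all add: Ob_def Ar_def)
  next
    fix f assume "f \<in> Ar" then show "dm f \<in> Ob" "cd f \<in> Ob" using arF by (auto simp: Ob_def Ar_def)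
  next
    fix e assume "e \<in> Ob" then show "idn e \<in> Ar" "dm (idn e) = e" "cd (idn e) = e"
      using idnF by (auto simp: Ob_def Ar_def)
  next
    fix f g assume "f \<in> Ar" "g \<in> Ar" "cd f = dm g"
    then show "cmp g f \<in> Ar" "dm (cmp g f) = dm f" "cd (cmp g f) = cd g"
      using cmpF by (auto simp: Ar_def)
  next
    fix f assume f: "f \<in> Ar"
    then have f': "f < m" by (simp add: Ar_def)
    show "cmp f (idn (dm f)) = f"
      using idnF[of "dm f"] arF[OF f'] dcomp_did_right[of "Gar f" "Gob (dm f)" "Gob (cd f)"] inva2[OF f'] eaf[OF f']
      by (simp add: cmp_def)
    show "cmp (idn (cd f)) f = f"
      using idnF[of "cd f"] arF[OF f'] dcomp_did_left[of "Gar f" "Gob (dm f)" "Gob (cd f)"] inva2[OF f'] eaf[OF f']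
      by (simp add: cmp_def)
  next
    fix f g h assume "f \<in> Ar" "g \<in> Ar" "h \<in> Ar" and c: "cd f = dm g \<and> cd g = dm h"
    then have f: "f < m" and g: "g < m" and h: "h < m" by (auto simp: Ar_def)
    have "dcomp (Gar h) (dcomp (Gar g) (Gar f)) = dcomp (dcomp (Gar h) (Gar g)) (Gar f)"
      using dcomp_assoc arF[OF f] arF[OF g] arF[OF h] c by metis
    then show "cmp h (cmp g f) = cmp (cmp h g) f"
      using cmpF[OF f g] cmpF[OF g h] c by (simp add: cmp_def)
  qed
  have fu: "is_functor Ob Ar dm cd idn cmp Gob Gar"
    unfolding is_functor_def
  proof (intro conjI ballI impI)
    fix f assume "f \<in> Ar" then show "Gar f \<in> dhom (Gob (dm f)) (Gob (cd f))"
      using arF by (simp add: Ar_def)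
  next
    fix e assume "e \<in> Ob" then show "Gar (idn e) = did (Gob e)" using idnF by (simp add: Ob_def)
  next
    fix f g assume "f \<in> Ar" "g \<in> Ar" "cd f = dm g"
    then show "Gar (cmp g f) = dcomp (Gar g) (Gar f)" using cmpF by (simp add: Ar_def)
  qed
  define B where "B U = (colim_base Ob Gob U :: (nat \<times> 'p morph) set)" for U
  define S where "S U = colim_step Ar dm cd Gob Gar U" for U
  define R where "R U = colim_equiv Ob Ar dm cd Gob Gar U" for U
  have R_def': "\<And>U. R U = Id_on (B U) \<union> (S U \<union> (S U)\<inverse>)\<^sup>+"
    by (simp add: R_def B_def S_def colim_equiv_def)
  define ev where "ev p = act (Gob (fst p)) (snd p) (xe (fst p))" for p
  define canon where "canon U z = (idx (U, cz U z), kz U z)" for U z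
  have B_iff: "\<And>U e phi. (e, phi) \<in> B U \<longleftrightarrow> e < n \<and> phi \<in> dhom U (Gob e)"
    by (simp add: B_def colim_base_def Ob_def)
  have ev_in: "\<And>U p. p \<in> B U \<Longrightarrow> ev p \<in> Z U"
  proof -
    fix U p assume p: "p \<in> B U"
    obtain e phi where pp: "p = (e, phi)" by (cases p)
    with p have e: "e < n" and phi: "phi \<in> dhom U (Gob e)" by (auto simp: B_iff)
    show "ev p \<in> Z U" using act_in[OF phi xeZ[OF e]] by (simp add: ev_def pp)
  qed
  have canon: "\<And>U z. z \<in> Z U \<Longrightarrow> canon U z \<in> B U \<and> ev (canon U z) = z"
  proof -
    fix U z assume z: "z \<in> Z U"
    note s = srj[OF z]
    note ii = idxG[OF conjunct1[OF s]]
    show "canon U z \<in> B U \<and> ev (canon U z) = z"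
      using s ii by (simp add: canon_def B_iff ev_def)
  qed
  have stepI: "\<And>U f phi. f < m \<Longrightarrow> phi \<in> dhom U (Gob (dm f)) \<Longrightarrow>
      ((dm f, phi), (cd f, dcomp (Gar f) phi)) \<in> S U"
    unfolding S_def colim_step_def Ar_def by auto
  have stepP: "\<And>U p q. (p, q) \<in> S U \<Longrightarrow> p \<in> B U \<and> q \<in> B U \<and> ev p = ev q"
  proof -
    fix U p q assume "(p, q) \<in> S U"
    then obtain f phi where pq: "p = (dm f, phi)" "q = (cd f, dcomp (Gar f) phi)" and f: "f < m"
      and phi: "phi \<in> dhom U (Gob (dm f))"
      unfolding S_def colim_step_def Ar_def atLeastLessThan_iff by blast
    note F = arF[OF f]
    have "ev q = act (Gob (dm f)) phi (act (Gob (cd f)) (Gar f) (xe (cd f)))"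
      using act_comp[of "Gar f" "Gob (dm f)" "Gob (cd f)" phi U "xe (cd f)"] F phi xeZ
      by (simp add: ev_def pq)
    also have "\<dots> = ev p" using F by (simp add: ev_def pq)
    finally show "p \<in> B U \<and> q \<in> B U \<and> ev p = ev q"
      using F phi dcomp_dhom[of "Gar f" "Gob (dm f)" "Gob (cd f)" phi U] by (auto simp: pq B_iff)
  qed
  have tocanon: "\<And>U p. p \<in> B U \<Longrightarrow> (p, canon U (ev p)) \<in> (S U \<union> (S U)\<inverse>)\<^sup>+"
  proof -
    fix U p assume p: "p \<in> B U"
    obtain i phi where pp: "p = (i, phi)" by (cases p)
    with p have i: "i < n" and phi: "phi \<in> dhom U (Gob i)" by (auto simp: B_iff)
    define z where "z = ev p"
    have zZ: "z \<in> Z U" using ev_in p by (simp add: z_def)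
    have z': "z = act (Gob i) phi (xe i)" by (simp add: z_def ev_def pp)
    obtain y psi a chi where y: "(U, y) \<in> E" and psi: "psi \<in> dhom U U" and a: "a \<in> dhom U (Gob i)"
      and ay: "act (Gob i) a (xe i) = y" and aphi: "dcomp a psi = phi" and chi: "chi \<in> dhom U U"
      and chiy: "act U chi (cz U z) = y" and chik: "dcomp chi psi = kz U z"
      using norm[OF eoE[OF i] phi] unfolding z' by blast
    define j where "j = idx (U, y)"
    have j: "j < n" "Gob j = U" "xe j = y" using idxG[OF y] by (simp_all add: j_def)
    define k where "k = idx (U, cz U z)"
    have k: "k < n" "Gob k = U" "xe k = cz U z" using idxG conjunct1[OF srj[OF zZ]] by (simp_all add: k_def)
    have m1: "inva (j, i, a) < m \<and> dm (inva (j, i, a)) = j \<and> cd (inva (j, i, a)) = i \<and> Gar (inva (j, i, a)) = a"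
      using mk[of j i a] j i a ay by simp
    have m2: "inva (j, k, chi) < m \<and> dm (inva (j, k, chi)) = j \<and> cd (inva (j, k, chi)) = k \<and> Gar (inva (j, k, chi)) = chi"
      using mk[of j k chi] j k chi chiy by simp
    have s1: "((j, psi), p) \<in> S U"
      using stepI[of "inva (j, i, a)" psi U] m1 psi j aphi by (simp add: pp)
    have s2: "((j, psi), canon U z) \<in> S U"
      using stepI[of "inva (j, k, chi)" psi U] m2 psi j chik by (simp add: canon_def k_def)
    from s1 s2 show "(p, canon U (ev p)) \<in> (S U \<union> (S U)\<inverse>)\<^sup>+"
      unfolding z_def[symmetric]
      by (meson UnI1 UnI2 converseI r_into_trancl trancl_trans)
  qed
  have Rchar: "\<And>U p q. (p, q) \<in> R U \<longleftrightarrow> p \<in> B U \<and> q \<in> B U \<and> ev p = ev q"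
  proof
    fix U p q assume "(p, q) \<in> R U"
    then consider "(p, q) \<in> Id_on (B U)" | "(p, q) \<in> (S U \<union> (S U)\<inverse>)\<^sup>+" unfolding R_def' by blast
    then show "p \<in> B U \<and> q \<in> B U \<and> ev p = ev q"
    proof cases
      case 1 then show ?thesis by auto
    next
      case 2 then show ?thesis
      proof (induction rule: trancl_induct)
        case (base y) then show ?case using stepP[of p y U] stepP[of y p U] by auto
      next
        case (step y z) then show ?case using stepP[of y z U] stepP[of z y U] by auto
      qed
    qed
  next
    fix U p q assume h: "p \<in> B U \<and> q \<in> B U \<and> ev p = ev q"
    have sy: "sym ((S U \<union> (S U)\<inverse>)\<^sup>+)" by (simp add: sym_trancl sym_Un_converse)
    have "(p, canon U (ev p)) \<in> (S U \<union> (S U)\<inverse>)\<^sup>+" using tocanon h by blast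
    moreover have "(canon U (ev p), q) \<in> (S U \<union> (S U)\<inverse>)\<^sup>+"
      using tocanon[of q U] h sy by (metis symD)
    ultimately show "(p, q) \<in> R U" unfolding R_def' by (meson UnI2 trancl_trans)
  qed
  define th where "th U z = {q \<in> B U. ev q = z}" for U z
  have cls: "\<And>U p. R U `` {p} = {q \<in> B U. p \<in> B U \<and> ev q = ev p}"
    using Rchar by auto
  have bij: "\<And>U. bij_betw (th U) (Z U) (colim Ob Ar dm cd Gob Gar U)"
  proof -
    fix U
    have col: "colim Ob Ar dm cd Gob Gar U = B U // R U" by (simp add: colim_def B_def R_def)
    have inj: "inj_on (th U) (Z U)"
    proof (rule inj_onI)
      fix z1 z2 assume z1: "z1 \<in> Z U" and z2: "z2 \<in> Z U" and e: "th U z1 = th U z2"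
      have "canon U z1 \<in> th U z1" using canon[OF z1] by (simp add: th_def)
      then have "canon U z1 \<in> th U z2" using e by simp
      then show "z1 = z2" using canon[OF z1] by (simp add: th_def)
    qed
    have img: "th U ` Z U = B U // R U"
    proof
      show "th U ` Z U \<subseteq> B U // R U"
      proof
        fix C assume "C \<in> th U ` Z U"
        then obtain z where z: "z \<in> Z U" and C: "C = th U z" by blast
        have "C = R U `` {canon U z}" using canon[OF z] by (auto simp: C th_def cls)
        then show "C \<in> B U // R U" using canon[OF z] by (auto intro: quotientI)
      qed
    next
      show "B U // R U \<subseteq> th U ` Z U"
      proof
        fix C assume "C \<in> B U // R U"
        then obtain p where p: "p \<in> B U" and C: "C = R U `` {p}" by (auto elim: quotientE)
        have "C = th U (ev p)" using p by (auto simp: C th_def cls)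
        then show "C \<in> th U ` Z U" using ev_in[OF p] by blast
      qed
    qed
    show "bij_betw (th U) (Z U) (colim Ob Ar dm cd Gob Gar U)"
      unfolding bij_betw_def col using inj img by blast
  qed
  have nat: "\<And>U V phi z. phi \<in> dhom V U \<and> z \<in> Z U \<Longrightarrow>
      th V (act U phi z) = colim_act Ob Ar dm cd Gob Gar V phi (th U z)"
  proof -
    fix U V and phi :: "'p morph" and z assume h: "phi \<in> dhom V U \<and> z \<in> Z U"
    define M where "M = {(e, dcomp a phi) | e a. (e, a) \<in> th U z}"
    have Mp: "\<And>q. q \<in> M \<Longrightarrow> q \<in> B V \<and> ev q = act U phi z"
    proof -
      fix q assume "q \<in> M"
      then obtain e a where q: "q = (e, dcomp a phi)" and ea': "(e, a) \<in> B U" and ez: "ev (e, a) = z"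
        unfolding M_def th_def by blast
      from ea' have e: "e < n" and a: "a \<in> dhom U (Gob e)" by (auto simp: B_iff)
      have "ev q = act U phi (act (Gob e) a (xe e))"
        using act_comp[OF a _ xeZ[OF e], of phi V] h by (simp add: q ev_def)
      then show "q \<in> B V \<and> ev q = act U phi z"
        using ez e a h dcomp_dhom[of a U "Gob e" phi V] by (auto simp: q B_iff ev_def)
    qed
    have "(fst (canon U z), dcomp (snd (canon U z)) phi) \<in> M"
    proof -
      have "canon U z \<in> th U z" using canon h unfolding th_def by blast
      then show ?thesis unfolding M_def by (cases "canon U z") force
    qed
    then have ne: "\<exists>q. q \<in> M" by blast
    have "R V `` M = th V (act U phi z)"
      unfolding th_def
    proof (intro set_eqI iffI)
      fix x assume "x \<in> R V `` M"
      then obtain q where "q \<in> M" "(q, x) \<in> R V" by blast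
      then show "x \<in> {q \<in> B V. ev q = act U phi z}" using Mp Rchar by auto
    next
      fix x assume x: "x \<in> {q \<in> B V. ev q = act U phi z}"
      obtain q where q: "q \<in> M" using ne by blast
      then have "(q, x) \<in> R V" using Mp x Rchar by auto
      then show "x \<in> R V `` M" using q by blast
    qed
    then show "th V (act U phi z) = colim_act Ob Ar dm cd Gob Gar V phi (th U z)"
      by (simp add: colim_act_def R_def M_def)
  qed
  show ?thesis
    unfolding fin_gen_def
    using ps fc fu bij nat by blast
qed


lemma fin_bounded: "finite {v :: 'p::finite \<Rightarrow> nat. \<forall>p. v p \<le> b p}"
proof -
  have "{v :: 'p \<Rightarrow> nat. \<forall>p. v p \<le> b p} \<subseteq> PiE UNIV (\<lambda>p. {..b p})"
    by (auto simp: PiE_def extensional_def)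
  moreover have "finite (PiE (UNIV :: 'p set) (\<lambda>p. {..b p}))" by (rule finite_PiE) auto
  ultimately show ?thesis by (rule finite_subset)
qed

definition EG :: "('t \<Rightarrow> 'a) \<Rightarrow> 't list set \<Rightarrow> nat \<Rightarrow> ('a list \<times> ('t list \<times> ('p \<Rightarrow> nat))) set" where
  "EG lab G L = {(map lab ts, (ts, v)) | ts v. ts \<in> G \<and> (\<forall>p. v p + length ts \<le> L)}"

lemma EG_iff: "(U, (ts, v)) \<in> EG lab G L \<longleftrightarrow> U = map lab ts \<and> ts \<in> G \<and> (\<forall>p. v p + length ts \<le> L)"
  by (auto simp: EG_def)

lemma fin_gen_ZG:
  fixes F :: "('p::finite \<times> 't + 't \<times> 'p) set" and lab :: "'t \<Rightarrow> 'a" and G :: "'t list set"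
  assumes Gsel: "\<And>ts xs. ts \<in> G \<Longrightarrow> sel ts xs \<in> G"
    and finG: "finite G"
    and GL: "\<And>ts. ts \<in> G \<Longrightarrow> length ts \<le> L"
  shows "fin_gen (ZG F lab G) (X_act F)"
proof (rule fin_gen_intro[where E = "EG lab G L"
      and cz = "\<lambda>U x. (fst x, \<lambda>_. 0)" and kz = "\<lambda>U x. (replicate (length U) None, snd x)"])
  show "presheaf (ZG F lab G) (X_act F)" using presheaf_ZG Gsel by blast
next
  have "(EG lab G L :: ('a list \<times> 't list \<times> ('p \<Rightarrow> nat)) set) \<subseteq>
        (\<lambda>(ts, v). (map lab ts, (ts, v))) ` (G \<times> {v :: 'p \<Rightarrow> nat. \<forall>p. v p \<le> L})"
  proof
    fix e :: "'a list \<times> 't list \<times> ('p \<Rightarrow> nat)" assume "e \<in> EG lab G L"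
    then obtain ts v where e: "e = (map lab ts, (ts, v))" and g: "ts \<in> G" and vb: "\<forall>p. v p + length ts \<le> L"
      unfolding EG_def by blast
    have "(ts, v) \<in> G \<times> {v :: 'p \<Rightarrow> nat. \<forall>p. v p \<le> L}" using g vb by (auto intro: le_trans[OF le_add1])
    then show "e \<in> (\<lambda>(ts, v). (map lab ts, (ts, v))) ` (G \<times> {v :: 'p \<Rightarrow> nat. \<forall>p. v p \<le> L})"
      unfolding e by (rule rev_image_eqI) simp
  qed
  moreover have "finite ((\<lambda>(ts, v). (map lab ts, (ts, v))) ` (G \<times> {v :: 'p \<Rightarrow> nat. \<forall>p. v p \<le> L}))"
    using finG fin_bounded[of "\<lambda>_. L"] by auto
  ultimately show "finite (EG lab G L :: ('a list \<times> 't list \<times> ('p \<Rightarrow> nat)) set)"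
    by (rule finite_subset)
next
  fix U and x :: "'t list \<times> ('p \<Rightarrow> nat)" assume "(U, x) \<in> EG lab G L"
  then show "x \<in> ZG F lab G U" by (auto simp: ZG_iff EG_def)
next
  fix U V and x y :: "'t list \<times> ('p \<Rightarrow> nat)"
  assume "(U, x) \<in> EG lab G L"
  then obtain ts v where x: "x = (ts, v)" and U: "U = map lab ts" unfolding EG_def by blast
  have "{phi \<in> dhom V U. X_act F U phi x = y} \<subseteq>
      {xs. set xs \<subseteq> UNIV \<and> length xs \<le> length U} \<times> {w. \<forall>p. w p \<le> snd y p}"
  proof
    fix phi assume h: "phi \<in> {phi \<in> dhom V U. X_act F U phi x = y}"
    obtain xs w where phi: "phi = (xs, w)" by (cases phi)
    from h have l: "length xs = length U" and a: "X_act F U (xs, w) (ts, v) = y"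
      by (auto simp: phi x dhom_iff)
    have "length ts = length xs" using l U by simp
    with a have "snd y = (\<lambda>p. v p + w p + fs F ts xs p)" by (auto simp: X_act_eq)
    then show "phi \<in> {xs. set xs \<subseteq> UNIV \<and> length xs \<le> length U} \<times> {w. \<forall>p. w p \<le> snd y p}"
      using l by (simp add: phi)
  qed
  moreover have "finite ({xs :: bool option list. set xs \<subseteq> UNIV \<and> length xs \<le> length U} \<times> {w. \<forall>p. w p \<le> snd y p})"
    using finite_lists_length_le[of "UNIV :: bool option set" "length U"] fin_bounded[of "snd y"] by simp
  ultimately show "finite {phi \<in> dhom V U. X_act F U phi x = y}" by (rule finite_subset)
next
  fix U and x :: "'t list \<times> ('p \<Rightarrow> nat)" assume h: "x \<in> ZG F lab G U"
  obtain ts v where x: "x = (ts, v)" by (cases x)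
  from h have U: "map lab ts = U" and g: "ts \<in> G" by (auto simp: x ZG_iff)
  have l: "length ts = length U" using U by auto
  show "(U, (fst x, \<lambda>_. 0)) \<in> EG lab G L \<and>
        (replicate (length U) None, snd x) \<in> dhom U U \<and>
        X_act F U (replicate (length U) None, snd x) (fst x, \<lambda>_. 0) = x"
    using U g GL[OF g] l by (auto simp: x dhom_iff sel_repl X_act_eq fs_repl EG_iff)
next
  fix U W and x :: "'t list \<times> ('p \<Rightarrow> nat)" and phi :: "'p morph"
  assume "(U, x) \<in> EG lab G L"
    and ph: "phi \<in> dhom W U"
  then obtain ts v where x: "x = (ts, v)" and U: "U = map lab ts" and g: "ts \<in> G"
    and vb: "\<forall>p. v p + length ts \<le> L" unfolding EG_def by blast
  obtain xs w where phi: "phi = (xs, w)" by (cases phi)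
  from ph have l: "length xs = length U" and W: "W = sel U xs" by (auto simp: phi dhom_iff)
  have lt: "length ts = length xs" using l U by simp
  have lW: "length W = cnt xs" using W l by (simp add: length_sel)
  have W': "W = map lab (sel ts xs)" using W U by (simp add: map_sel)
  define y where "y = (sel ts xs, \<lambda>p. v p + fs F ts xs p)"
  define psi where "psi = (replicate (length W) (None :: bool option), w)"
  define a where "a = (xs, \<lambda>_::'p. 0::nat)"
  define chi where "chi = (replicate (length W) (None :: bool option), \<lambda>p. v p + fs F ts xs p)"
  have z: "X_act F U phi x = (sel ts xs, \<lambda>p. v p + w p + fs F ts xs p)"
    using lt by (simp add: phi x X_act_eq)
  have lsel: "length (sel ts xs) = length W" using W' by simp
  show "\<exists>y psi a chi. (W, y) \<in> EG lab G L \<and>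
          psi \<in> dhom W W \<and> a \<in> dhom W U \<and> X_act F U a x = y \<and>
          dcomp a psi = phi \<and> chi \<in> dhom W W \<and>
          X_act F W chi ((\<lambda>U x. (fst x, \<lambda>_. 0)) W (X_act F U phi x)) = y \<and>
          dcomp chi psi = (\<lambda>U x. (replicate (length U) None, snd x)) W (X_act F U phi x)"
  proof (intro exI conjI)
    show "(W, y) \<in> EG lab G L"
    proof -
      have "\<forall>p. v p + fs F ts xs p + length (sel ts xs) \<le> L"
        using vb fs_bound[of F ts xs] by (metis add.assoc add_le_mono le_trans order_refl)
      then show ?thesis using W' Gsel[OF g] by (auto simp: y_def EG_iff)
    qed
    show "psi \<in> dhom W W" by (simp add: psi_def dhom_iff sel_repl)
    show "a \<in> dhom W U" by (simp add: a_def dhom_iff l W)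
    show "X_act F U a x = y" using lt by (simp add: a_def x y_def X_act_eq)
    show "dcomp a psi = phi" by (simp add: a_def psi_def phi dcomp_def lW fill_repl_right)
    show "chi \<in> dhom W W" by (simp add: chi_def dhom_iff sel_repl)
    show "X_act F W chi ((\<lambda>U x. (fst x, \<lambda>_. 0)) W (X_act F U phi x)) = y"
      using lsel by (simp add: z chi_def y_def X_act_eq sel_repl fs_repl)
    show "dcomp chi psi = (\<lambda>U x. (replicate (length U) None, snd x)) W (X_act F U phi x)"
      by (simp add: z chi_def psi_def dcomp_def fill_repl_left fun_eq_iff)
  qed
qed


theorem proposition17:
  fixes F :: "('p::finite \<times> 't::finite + 't \<times> 'p) set"
    and lab :: "'t \<Rightarrow> 'a"
    and d :: nat
  assumes "d \<ge> 1"
  shows "fin_gen (X_nac F lab) (X_act F) \<and> fin_gen (X_le F lab d) (X_act F) \<and>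
         (\<forall>S A. finite S \<and> finite A \<and> S \<subseteq> elems (X_nac F lab) \<and> A \<subseteq> elems (X_nac F lab)
                \<longrightarrow> hdac_finite_type (X_nac F lab) (X_act F) S A) \<and>
         (\<forall>S A. finite S \<and> finite A \<and> S \<subseteq> elems (X_le F lab d) \<and> A \<subseteq> elems (X_le F lab d)
                \<longrightarrow> hdac_finite_type (X_le F lab d) (X_act F) S A)"
proof -
  have e1: "X_nac F lab = ZG F lab {ts. distinct ts}"
    by (auto simp: fun_eq_iff X_nac_def ZG_def)
  have e2: "X_le F lab d = ZG F lab {ts. length ts \<le> d}"
    by (auto simp: fun_eq_iff X_le_def ZG_def)
  have dl: "\<And>ts :: 't list. distinct ts \<Longrightarrow> length ts \<le> card (UNIV :: 't set)"
    by (metis card_mono distinct_card finite subset_UNIV)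
  have fd: "finite {ts :: 't list. distinct ts}"
    by (rule finite_subset[OF _ finite_lists_length_le[of "UNIV :: 't set" "card (UNIV :: 't set)"]])
       (use dl in auto)
  have g1: "fin_gen (X_nac F lab) (X_act F)"
    unfolding e1 by (rule fin_gen_ZG[where L = "card (UNIV :: 't set)"]) (use distinct_sel fd dl in auto)
  have fl: "finite {ts :: 't list. length ts \<le> d}"
    using finite_lists_length_le[of "UNIV :: 't set" d] by simp
  have g2: "fin_gen (X_le F lab d) (X_act F)"
    unfolding e2 by (rule fin_gen_ZG[where L = d]) (use fl in \<open>auto intro: le_trans[OF length_sel_le]\<close>)
  show ?thesis using g1 g2 by (auto simp: hdac_finite_type_def)
qed

end
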